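(* Let $G\ge 2$, $\Delta\in(0,1/2]$, and $p_t\in[\Delta,1-\Delta]$. Let $r_{t,1},\dots,r_{t,G}$ be i.i.d. $\mathrm{Bernoulli}(p_t)$, $R=\sum_j r_{t,j}$, $\hat p_t=R/G$, $\mathcal S=\{1\le R\le G-1\}$. For a real constant $c$ let $\tilde p_t=c\,\hat p_t$. Given $\delta\in(0,1)$, define \[ \epsilon_\delta:=\sqrt{\frac{1}{2G}\log\!\left(\frac{2}{\delta\bigl(1-(1-\Delta)^G-\Delta^G\bigr)}\right)}, \] $I_t:=[\hat p_t-\epsilon_\delta,\hat p_t+\epsilon_\delta]\cap[\Delta,1-\Delta]$, and $A(p):=1-(1-p)^G-p^G$. Fix $\epsilon>0$ and define \[ c_{\mathrm{low}}:=\sup_{p\in I_t}\frac{(p-\epsilon)A(p)}{p(1-p^{G-1})},\qquad c_{\mathrm{high}}:=\inf_{p\in I_t}\frac{(p+\epsilon)A(p)}{p(1-p^{G-1})}. \] Then, with probability at least $1-\delta$ conditional on $\mathcal S$ (over the draw of $\hat p_t$ determining $I_t$, $c_{\mathrm{low}}$, $c_{\mathrm{high}}$), every constant $c\in(c_{\mathrm{low}},c_{\mathrm{high}})$ satisfies $\mathbb E[\tilde p_t\mid\mathcal S]=c\,\mathbb E[\hat p_t\mid\mathcal S]\in(p_t-\epsilon,\ p_t+\epsilon)$.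
   Context: Binary-reward group setting: $G$ i.i.d. Bernoulli$(p_t)$ rewards for a prompt with expected reward $p_t$; $\hat p_t$ is the empirical group baseline; $\tilde p_t=c\hat p_t$ is a rescaled ("rectified") baseline; $\mathcal S$ is the non-degenerate event. *)

theory Defs
  imports "HOL-Probability.Probability"
begin

definition rewards :: "nat \<Rightarrow> real \<Rightarrow> (nat \<Rightarrow> bool) pmf" where
  "rewards G p = Pi_pmf {..<G} False (\<lambda>_. bernoulli_pmf p)"

definition Rsum :: "nat \<Rightarrow> (nat \<Rightarrow> bool) \<Rightarrow> nat" where
  "Rsum G r = card {j \<in> {..<G}. r j}"

definition phat :: "nat \<Rightarrow> (nat \<Rightarrow> bool) \<Rightarrow> real" where
  "phat G r = real (Rsum G r) / real G"

definition nondeg :: "nat \<Rightarrow> (nat \<Rightarrow> bool) set" where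
  "nondeg G = {r. 1 \<le> Rsum G r \<and> Rsum G r \<le> G - 1}"

definition Afun :: "nat \<Rightarrow> real \<Rightarrow> real" where
  "Afun G q = 1 - (1 - q) ^ G - q ^ G"

definition eps_delta :: "nat \<Rightarrow> real \<Rightarrow> real \<Rightarrow> real" where
  "eps_delta G \<Delta> \<delta> = sqrt (1 / (2 * real G) * ln (2 / (\<delta> * (1 - (1 - \<Delta>) ^ G - \<Delta> ^ G))))"

definition Iint :: "nat \<Rightarrow> real \<Rightarrow> real \<Rightarrow> (nat \<Rightarrow> bool) \<Rightarrow> real set" where
  "Iint G \<Delta> \<delta> r = {phat G r - eps_delta G \<Delta> \<delta> .. phat G r + eps_delta G \<Delta> \<delta>} \<inter> {\<Delta> .. 1 - \<Delta>}"

definition c_low :: "nat \<Rightarrow> real \<Rightarrow> real \<Rightarrow> real \<Rightarrow> (nat \<Rightarrow> bool) \<Rightarrow> real" where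
  "c_low G \<Delta> \<delta> \<epsilon> r =
     (SUP q \<in> Iint G \<Delta> \<delta> r. (q - \<epsilon>) * Afun G q / (q * (1 - q ^ (G - 1))))"

definition c_high :: "nat \<Rightarrow> real \<Rightarrow> real \<Rightarrow> real \<Rightarrow> (nat \<Rightarrow> bool) \<Rightarrow> real" where
  "c_high G \<Delta> \<delta> \<epsilon> r =
     (INF q \<in> Iint G \<Delta> \<delta> r. (q + \<epsilon>) * Afun G q / (q * (1 - q ^ (G - 1))))"

end

theory Submission
  imports Defs
begin

lemma pow_lt_self: fixes x :: real assumes "0 < x" "x < 1" "2 \<le> n" shows "x ^ n < x"
  using power_strict_decreasing[of 1 n x] assms by simp

lemma convex_pow: "convex_on {0::real..} (\<lambda>x. x ^ n)"
proof (cases "even n")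
  case True
  then show ?thesis using convex_on_subset[OF convex_power_even[OF True]] by auto
next
  case False
  then show ?thesis using convex_power_odd by blast
qed

lemma A_mono:
  fixes D q :: real and G :: nat
  assumes "0 < D" "D \<le> 1/2" "D \<le> q" "q \<le> 1 - D"
  shows "q ^ G + (1 - q) ^ G \<le> D ^ G + (1 - D) ^ G"
proof (cases "D = 1/2")
  case True
  then have "q = 1/2" using assms by auto
  then have "D = q" using True by simp
  then show ?thesis by simp
next
  case False
  define t where "t = (q - D) / (1 - 2 * D)"
  have d: "1 - 2 * D > 0" using assms False by auto
  have t0: "0 \<le> t" and t1: "t \<le> 1" using assms d unfolding t_def by (auto simp: field_simps)
  have tt: "t * (1 - 2*D) = q - D" using d unfolding t_def by simp
  have q1: "q = (1 - t) * D + t * (1 - D)"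
  proof -
    have "(1 - t) * D + t * (1 - D) = D + t * (1 - 2*D)" by (simp add: algebra_simps)
    then show ?thesis using tt by simp
  qed
  have q2: "1 - q = (1 - t) * (1 - D) + t * D" using q1 by (simp add: algebra_simps)
  have "q ^ G \<le> (1 - t) * D ^ G + t * (1 - D) ^ G"
    using convex_onD[OF convex_pow, of t D "1 - D" G] t0 t1 assms q1 by simp
  moreover have "(1 - q) ^ G \<le> (1 - t) * (1 - D) ^ G + t * D ^ G"
    using convex_onD[OF convex_pow, of t "1 - D" D G] t0 t1 assms q2 by simp
  ultimately show ?thesis by (simp add: algebra_simps)
qed

lemma A_pos:
  fixes q :: real assumes "0 < q" "q < 1" "2 \<le> G" shows "Afun G q > 0"
  using pow_lt_self[OF assms] pow_lt_self[of "1 - q" G] assms unfolding Afun_def by simp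

lemma bdd_aux:
  fixes g :: "real \<Rightarrow> real"
  assumes "compact T" "continuous_on T g"
  shows "bdd_above (g ` T)" "bdd_below (g ` T)"
proof -
  have "bounded (g ` T)" using compact_continuous_image[OF assms(2,1)] compact_imp_bounded by blast
  then show "bdd_above (g ` T)" "bdd_below (g ` T)" using bounded_imp_bdd_above bounded_imp_bdd_below by auto
qed

lemma expect_Rsum:
  assumes p: "0 \<le> p" "p \<le> 1"
  shows "measure_pmf.expectation (rewards G p) (\<lambda>\<omega>. real (Rsum G \<omega>)) = real G * p"
proof -
  have eq1: "real (Rsum G x) = (\<Sum>i<G. if x i then 1 else 0)" for x
  proof -
    have "(\<Sum>i<G. if x i then 1 else (0::real)) = (\<Sum>i\<in>{i\<in>{..<G}. x i}. 1)"
      by (intro sum.mono_neutral_cong_right) auto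
    thus ?thesis by (simp add: Rsum_def)
  qed
  have int: "integrable (measure_pmf (rewards G p)) (\<lambda>x. if x i then 1 else (0::real))" for i
    by (rule measure_pmf.finite_borel_measurable_integrable) (auto intro: finite_subset[of _ "{0,1}"])
  have comp: "measure_pmf.expectation (rewards G p) (\<lambda>x. if x i then 1 else (0::real)) = p" if "i < G" for i
  proof -
    have "measure_pmf.expectation (rewards G p) (\<lambda>x. if x i then 1 else (0::real)) =
      measure_pmf.expectation (map_pmf (\<lambda>f. f i) (rewards G p)) (\<lambda>b. if b then 1 else (0::real))"
      by simp
    also have "map_pmf (\<lambda>f. f i) (rewards G p) = bernoulli_pmf p"
      using that by (simp add: rewards_def Pi_pmf_component)
    finally show ?thesis using p by simp
  qed
  have "measure_pmf.expectation (rewards G p) (\<lambda>x. \<Sum>i<G. if x i then 1 else (0::real))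
     = (\<Sum>i<G. measure_pmf.expectation (rewards G p) (\<lambda>x. if x i then 1 else (0::real)))"
    using Bochner_Integration.integral_sum[where I="{..<G}" and M="measure_pmf (rewards G p)" and f="\<lambda>i x. if x i then 1 else (0::real)"] int by simp
  also have "\<dots> = (\<Sum>i<G. p)" by (rule sum.cong) (auto simp: comp)
  finally show ?thesis unfolding eq1 by simp
qed

theorem lemma1:
  fixes G :: nat and \<Delta> p \<delta> \<epsilon> :: real
  assumes "G \<ge> 2"
    and "0 < \<Delta>" and "\<Delta> \<le> 1 / 2"
    and "\<Delta> \<le> p" and "p \<le> 1 - \<Delta>"
    and "0 < \<delta>" and "\<delta> < 1"
    and "0 < \<epsilon>"
  shows "measure_pmf.prob (cond_pmf (rewards G p) (nondeg G))
           {\<omega>. \<forall>c::real. c_low G \<Delta> \<delta> \<epsilon> \<omega> < c \<and> c < c_high G \<Delta> \<delta> \<epsilon> \<omega> \<longrightarrow>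
                measure_pmf.expectation (cond_pmf (rewards G p) (nondeg G)) (\<lambda>r. c * phat G r)
                  = c * measure_pmf.expectation (cond_pmf (rewards G p) (nondeg G)) (phat G)
              \<and> c * measure_pmf.expectation (cond_pmf (rewards G p) (nondeg G)) (phat G) \<in> {p - \<epsilon> <..< p + \<epsilon>}}
         \<ge> 1 - \<delta>"
proof -
  have p0: "0 < p" and p1: "p < 1" using assms by auto
  have G0: "G > 0" using assms by auto
  define M where "M = rewards G p"
  define Bin where "Bin = binomial_pmf G p"
  define T where "T = {1..G-1}"
  define K where "K = cond_pmf M (nondeg G)"
  define B where "B = cond_pmf Bin T"
  define e where "e = eps_delta G \<Delta> \<delta>"
  define AD where "AD = Afun G \<Delta>"
  define Ap where "Ap = Afun G p"
  have ADpos: "AD > 0" unfolding AD_def using A_pos[of \<Delta> G] assms by auto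
  have Appos: "Ap > 0" unfolding Ap_def using A_pos[of p G] assms p0 p1 by auto
  have ADle: "AD \<le> Ap" unfolding AD_def Ap_def Afun_def using A_mono[of \<Delta> p G] assms by simp
  have AD1: "AD \<le> 1"
  proof -
    have "0 \<le> \<Delta> ^ G" "0 \<le> (1 - \<Delta>) ^ G" using assms by auto
    then show ?thesis unfolding AD_def Afun_def by linarith
  qed
  have hMB: "map_pmf (Rsum G) M = Bin"
    unfolding M_def Bin_def rewards_def Rsum_def
    by (rule binomial_pmf_altdef'[symmetric]) (use p0 p1 in auto)
  have hS: "nondeg G = Rsum G -` T" unfolding nondeg_def T_def by auto
  have setBin: "set_pmf Bin = {..G}" unfolding Bin_def using p0 p1 by simp
  have TG: "T \<subseteq> {..G}" "finite T" unfolding T_def by auto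
  have BinT: "set_pmf Bin \<inter> T \<noteq> {}" using setBin assms unfolding T_def by auto
  have MS: "set_pmf M \<inter> Rsum G -` T \<noteq> {}"
    using BinT unfolding hMB[symmetric] by auto
  have hKB: "map_pmf (Rsum G) K = B"
    unfolding K_def B_def hS hMB[symmetric] using cond_map_pmf[OF MS] by simp
  have pmfB: "pmf B k = (if k \<in> T then pmf Bin k / measure_pmf.prob Bin T else 0)" for k
    unfolding B_def using pmf_cond[OF BinT] by simp
  have setB: "set_pmf B = T" unfolding B_def using set_cond_pmf[OF BinT] setBin TG by auto
  have sumall: "(\<Sum>k\<le>G. f k) = f 0 + (\<Sum>k\<in>T. f k) + f G" for f :: "nat \<Rightarrow> real"
  proof -
    have "{..G} = insert 0 (insert G T)" unfolding T_def using assms by auto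
    moreover have "0 \<notin> insert G T" "G \<notin> T" unfolding T_def using assms by auto
    ultimately show ?thesis using TG by (simp add: algebra_simps)
  qed
  have pb0: "pmf Bin 0 = (1 - p) ^ G" and pbG: "pmf Bin G = p ^ G"
    unfolding Bin_def using p0 p1 by simp_all
  have PS: "measure_pmf.prob Bin T = Ap"
  proof -
    have "(\<Sum>k\<le>G. pmf Bin k) = 1" by (rule sum_pmf_eq_1) (use setBin in auto)
    then have "(1 - p) ^ G + (\<Sum>k\<in>T. pmf Bin k) + p ^ G = 1"
      unfolding sumall by (simp add: pb0 pbG)
    then show ?thesis using measure_measure_pmf_finite[OF TG(2)] unfolding Ap_def Afun_def by simp
  qed
  have sumk: "(\<Sum>k\<in>T. real k * pmf Bin k) = real G * p - real G * p ^ G"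
  proof -
    have "measure_pmf.expectation Bin real = real G * p"
      using expect_Rsum[of p G] p0 p1 unfolding hMB[symmetric] M_def by simp
    moreover have "measure_pmf.expectation Bin real = (\<Sum>k\<le>G. real k * pmf Bin k)"
      by (rule integral_measure_pmf_real) (use setBin in auto)
    ultimately have "(\<Sum>k\<le>G. real k * pmf Bin k) = real G * p" by simp
    then show ?thesis unfolding sumall by (simp add: pb0 pbG)
  qed
  define m where "m = p * (1 - p ^ (G - 1)) / Ap"
  have pG: "p ^ G = p * p ^ (G - 1)"
  proof -
    obtain n where "G = Suc n" using G0 gr0_implies_Suc by blast
    then show ?thesis by simp
  qed
  have pG1: "p ^ (G - 1) < 1"
  proof -
    have "p ^ (G - 1) \<le> p ^ 1" by (rule power_decreasing) (use assms p0 p1 in auto)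
    then show ?thesis using p1 by simp
  qed
  have mpos: "m > 0" unfolding m_def using p0 pG1 Appos by simp
  have EK: "measure_pmf.expectation K (phat G) = m"
  proof -
    have "measure_pmf.expectation K (phat G) = measure_pmf.expectation B (\<lambda>k. real k / real G)"
      unfolding hKB[symmetric] phat_def by simp
    also have "\<dots> = (\<Sum>k\<in>T. real k / real G * pmf B k)"
      by (rule integral_measure_pmf_real) (use setB TG in auto)
    also have "\<dots> = (\<Sum>k\<in>T. real k * pmf Bin k) / (real G * Ap)"
      by (simp add: pmfB PS sum_divide_distrib)
    also have "\<dots> = m" unfolding sumk m_def using G0 Appos pG by (simp add: field_simps)
    finally show ?thesis .
  qed
  have x0: "0 < \<delta> * AD" using assms ADpos by simp
  have "\<delta> * AD \<le> \<delta> * 1" by (rule mult_left_mono) (use AD1 assms in auto)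
  then have x1: "\<delta> * AD < 1" using assms by linarith
  have lnarg: "2 / (\<delta> * AD) > 1" using x0 x1 by (simp add: field_simps)
  have ln0: "0 \<le> ln (2 / (\<delta> * AD)) / (2 * real G)" using lnarg by simp
  have eeq: "e = sqrt (ln (2 / (\<delta> * AD)) / (2 * real G))"
    unfolding e_def eps_delta_def AD_def Afun_def by simp
  have e2: "e ^ 2 = ln (2 / (\<delta> * AD)) / (2 * real G)"
    unfolding eeq using ln0 by simp
  have e0: "e \<ge> 0" unfolding eeq using ln0 by simp
  have hoef: "measure_pmf.prob Bin {k. e \<le> \<bar>real k / real G - p\<bar>} \<le> \<delta> * AD"
  proof -
    interpret binomial_distribution G p by unfold_locales (use p0 p1 in auto)
    have "measure_pmf.prob Bin {k. e \<le> \<bar>real k / real G - p\<bar>} \<le> 2 * exp (-2 * real G * e\<^sup>2)"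
      unfolding Bin_def using prob_abs_ge'[OF G0 e0] by simp
    also have "-2 * real G * e\<^sup>2 = - ln (2 / (\<delta> * AD))" unfolding e2 using G0 by simp
    also have "2 * exp (- ln (2 / (\<delta> * AD))) = \<delta> * AD"
      using lnarg assms ADpos by (simp add: exp_minus)
    finally show ?thesis .
  qed
  define bad where "bad = {k::nat. \<not> \<bar>real k / real G - p\<bar> \<le> e}"
  have probB: "measure_pmf.prob B bad \<le> \<delta>"
  proof -
    have "measure_pmf.prob B bad = measure_pmf.prob B (bad \<inter> T)"
      using measure_Int_set_pmf[of B bad] setB by simp
    also have "\<dots> = (\<Sum>k\<in>bad \<inter> T. pmf B k)" using TG by (simp add: measure_measure_pmf_finite)
    also have "\<dots> = (\<Sum>k\<in>bad \<inter> T. pmf Bin k) / Ap"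
      by (simp add: pmfB PS sum_divide_distrib)
    also have "(\<Sum>k\<in>bad \<inter> T. pmf Bin k) = measure_pmf.prob Bin (bad \<inter> T)"
      using TG by (simp add: measure_measure_pmf_finite)
    also have "\<dots> \<le> measure_pmf.prob Bin {k. e \<le> \<bar>real k / real G - p\<bar>}"
      by (rule measure_pmf.finite_measure_mono) (auto simp: bad_def)
    also have "\<dots> \<le> \<delta> * AD" by (rule hoef)
    finally have "measure_pmf.prob B bad \<le> \<delta> * AD / Ap" using Appos by (simp add: divide_right_mono)
    also have "\<dots> \<le> \<delta>" using Appos ADle assms by (simp add: field_simps)
    finally show ?thesis .
  qed
  define good where "good = {\<omega>. \<bar>phat G \<omega> - p\<bar> \<le> e}"
  have probK: "measure_pmf.prob K (- good) \<le> \<delta>"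
  proof -
    have "- good = Rsum G -` bad" unfolding good_def bad_def phat_def by auto
    then have "measure_pmf.prob K (- good) = measure_pmf.prob B bad"
      unfolding hKB[symmetric] by simp
    then show ?thesis using probB by simp
  qed
  have sub: "good \<subseteq> {\<omega>. \<forall>c::real. c_low G \<Delta> \<delta> \<epsilon> \<omega> < c \<and> c < c_high G \<Delta> \<delta> \<epsilon> \<omega> \<longrightarrow>
                measure_pmf.expectation K (\<lambda>r. c * phat G r)
                  = c * measure_pmf.expectation K (phat G)
              \<and> c * measure_pmf.expectation K (phat G) \<in> {p - \<epsilon> <..< p + \<epsilon>}}"
  proof safe
    fix \<omega> c assume g: "\<omega> \<in> good" and lo: "c_low G \<Delta> \<delta> \<epsilon> \<omega> < c" and hi: "c < c_high G \<Delta> \<delta> \<epsilon> \<omega>"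
    show "measure_pmf.expectation K (\<lambda>r. c * phat G r) = c * measure_pmf.expectation K (phat G)"
      by simp
    define I where "I = Iint G \<Delta> \<delta> \<omega>"
    have pI: "p \<in> I" using g assms unfolding I_def Iint_def good_def e_def by auto
    have Isub: "I \<subseteq> {\<Delta>..1-\<Delta>}" unfolding I_def Iint_def by auto
    have Icomp: "compact I" unfolding I_def Iint_def by (intro compact_Int compact_Icc)
    have den: "q * (1 - q ^ (G - 1)) \<noteq> 0" if "q \<in> I" for q
    proof -
      have "0 < q" "q < 1" using that Isub assms by auto
      have "q ^ (G - 1) \<le> q ^ 1" by (rule power_decreasing) (use assms \<open>0 < q\<close> \<open>q < 1\<close> in auto)
      then have "q ^ (G - 1) < 1" using \<open>q < 1\<close> by simp
      then show ?thesis using \<open>0 < q\<close> by simp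
    qed
    have cl: "continuous_on I (\<lambda>q. (q - \<epsilon>) * Afun G q / (q * (1 - q ^ (G - 1))))"
      unfolding Afun_def by (intro continuous_intros) (use den in auto)
    have ch: "continuous_on I (\<lambda>q. (q + \<epsilon>) * Afun G q / (q * (1 - q ^ (G - 1))))"
      unfolding Afun_def by (intro continuous_intros) (use den in auto)
    have "(p - \<epsilon>) * Afun G p / (p * (1 - p ^ (G - 1))) \<le> c_low G \<Delta> \<delta> \<epsilon> \<omega>"
      unfolding c_low_def I_def[symmetric] by (rule cSUP_upper[OF pI bdd_aux(1)[OF Icomp cl]])
    moreover have "c_high G \<Delta> \<delta> \<epsilon> \<omega> \<le> (p + \<epsilon>) * Afun G p / (p * (1 - p ^ (G - 1)))"
      unfolding c_high_def I_def[symmetric] by (rule cINF_lower[OF bdd_aux(2)[OF Icomp ch] pI])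
    moreover have "(p - \<epsilon>) * Afun G p / (p * (1 - p ^ (G - 1))) = (p - \<epsilon>) / m"
      "(p + \<epsilon>) * Afun G p / (p * (1 - p ^ (G - 1))) = (p + \<epsilon>) / m"
      unfolding m_def Ap_def[symmetric] using p0 pG1 Appos by (simp_all add: field_simps)
    ultimately have "(p - \<epsilon>) / m < c" "c < (p + \<epsilon>) / m" using lo hi by auto
    then have "p - \<epsilon> < c * m" "c * m < p + \<epsilon>" using mpos by (simp_all add: field_simps)
    then show "c * measure_pmf.expectation K (phat G) \<in> {p - \<epsilon> <..< p + \<epsilon>}"
      unfolding EK by simp
  qed
  have "1 - \<delta> \<le> measure_pmf.prob K good"
    using probK measure_pmf.prob_compl[of good K] by (simp add: Compl_eq_Diff_UNIV)
  also have "\<dots> \<le> measure_pmf.prob K {\<omega>. \<forall>c::real. c_low G \<Delta> \<delta> \<epsilon> \<omega> < c \<and> c < c_high G \<Delta> \<delta> \<epsilon> \<omega> \<longrightarrow>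
                measure_pmf.expectation K (\<lambda>r. c * phat G r)
                  = c * measure_pmf.expectation K (phat G)
              \<and> c * measure_pmf.expectation K (phat G) \<in> {p - \<epsilon> <..< p + \<epsilon>}}"
    by (rule measure_pmf.finite_measure_mono[OF sub]) simp
  finally show ?thesis unfolding K_def M_def .
qed

end
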